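(* Let $a,b,k,n$ be positive integers with $k=a+b\ge2$ and $n\ge\max\{a,b\}$. Then $$\left(1+\frac an\right)^b\left(1-\frac bn\right)^a\ge1-\frac{\max\{ab^2,ba^2\}}{n^2}\ge1-\frac{(4/27)k^3}{n^2}.$$ *)

theory Defs
  imports Complex_Main
begin

end

theory Submission
  imports Defs "HOL-Analysis.Analysis"
begin

lemma key_pow:
  fixes p q :: nat and z :: real
  assumes "0 < p" "p \<le> q" "1 + real q * z > 0"
  shows "(1 + real q * z) ^ p \<le> (1 + real p * z) ^ q"
proof -
  define t where "t = real p / real q"
  have q0: "real q > 0" using assms by simp
  have t0: "t \<ge> 0" "t \<le> 1" using assms by (auto simp: t_def)
  have comb: "(1 - t) *\<^sub>R 1 + t *\<^sub>R (1 + real q * z) = 1 + real p * z"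
    using q0 by (simp add: t_def field_simps)
  have c: "(1 - t) * ln 1 + t * ln (1 + real q * z) \<le> ln ((1 - t) *\<^sub>R 1 + t *\<^sub>R (1 + real q * z))"
    by (rule concave_onD[OF ln_concave]) (use t0 assms in auto)
  have l: "t * ln (1 + real q * z) \<le> ln (1 + real p * z)" using c[unfolded comb] by simp
  have pos: "1 + real p * z > 0"
  proof -
    have "(1 - t) * 1 + t * (1 + real q * z) > 0"
    proof (cases "t = 1")
      case True then show ?thesis using assms by simp
    next
      case False then have "1 - t > 0" using t0 by simp
      moreover have "t * (1 + real q * z) \<ge> 0" using t0 assms by simp
      ultimately show ?thesis by (simp only: mult_1_right)
    qed
    moreover have "(1 - t) * 1 + t * (1 + real q * z) = 1 + real p * z" using comb by simp
    ultimately show ?thesis by linarith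
  qed
  have "real p * ln (1 + real q * z) \<le> real q * ln (1 + real p * z)"
    using mult_left_mono[OF l, of "real q"] q0 by (simp add: t_def)
  hence "ln ((1 + real q * z) ^ p) \<le> ln ((1 + real p * z) ^ q)"
    using assms pos by (simp add: ln_realpow)
  thus ?thesis using assms pos by simp
qed

theorem lemma5p5:
  fixes a b k n :: nat
  assumes "a > 0" and "b > 0" and "k = a + b" and "k \<ge> 2"
    and "n \<ge> max a b"
  shows "(1 + real a / real n) ^ b * (1 - real b / real n) ^ a
           \<ge> 1 - real (max (a * b^2) (b * a^2)) / (real n)^2
         \<and> 1 - real (max (a * b^2) (b * a^2)) / (real n)^2
           \<ge> 1 - (4/27) * (real k)^3 / (real n)^2"
proof
  have n0: "real n > 0" using assms by simp
  define x where "x = 1 / real n"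
  have x0: "x > 0" using n0 by (simp add: x_def)
  have ax: "real a * x \<le> 1" "real b * x \<le> 1" using assms n0 by (auto simp: x_def field_simps)
  have eq1: "real a / real n = real a * x" "real b / real n = real b * x" by (simp_all add: x_def)
  have eq2: "real m / (real n)^2 = real m * x^2" for m by (simp add: x_def power2_eq_square)
  show "(1 + real a / real n) ^ b * (1 - real b / real n) ^ a
           \<ge> 1 - real (max (a * b^2) (b * a^2)) / (real n)^2"
  proof (cases "a \<le> b")
    case True
    have "(1 + real b * x) ^ a \<le> (1 + real a * x) ^ b"
      using key_pow[of a b x] True assms x0 by (simp add: add_pos_nonneg)
    hence "(1 + real b * x) ^ a * (1 - real b * x) ^ a \<le> (1 + real a * x) ^ b * (1 - real b * x) ^ a"
      using ax by (intro mult_right_mono) auto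
    moreover have "(1 + real b * x) ^ a * (1 - real b * x) ^ a = (1 - (real b * x)^2) ^ a"
      by (simp add: power_mult_distrib[symmetric] algebra_simps power2_eq_square)
    moreover have "1 - real a * (real b * x)^2 \<le> (1 - (real b * x)^2) ^ a"
    proof -
      have "(real b * x)^2 \<le> 1" using ax x0 by (simp add: power_le_one)
      then show ?thesis using Bernoulli_inequality[of "- ((real b * x)^2)" a] by simp
    qed
    moreover have "real (max (a * b^2) (b * a^2)) = real a * real b ^ 2"
    proof -
      have "(a*b)*a \<le> (a*b)*b" using True by (rule mult_le_mono2)
      hence "b * a^2 \<le> a * b^2" by (simp add: power2_eq_square algebra_simps)
      thus ?thesis by (simp add: max_def)
    qed
    ultimately show ?thesis unfolding eq1 eq2 by (simp add: power_mult_distrib algebra_simps)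
  next
    case False
    have A: "(1 - real a * x) ^ b \<le> (1 - real b * x) ^ a"
    proof (cases "real a * x = 1")
      case True then show ?thesis using ax assms(2) by (simp add: zero_power)
    next
      case F: False
      then have "1 + real a * (- x) > 0" using ax by simp
      then show ?thesis using key_pow[of b a "-x"] False assms by simp
    qed
    hence "(1 + real a * x) ^ b * (1 - real a * x) ^ b \<le> (1 + real a * x) ^ b * (1 - real b * x) ^ a"
      using x0 by (intro mult_left_mono) auto
    moreover have "(1 + real a * x) ^ b * (1 - real a * x) ^ b = (1 - (real a * x)^2) ^ b"
      by (simp add: power_mult_distrib[symmetric] algebra_simps power2_eq_square)
    moreover have "1 - real b * (real a * x)^2 \<le> (1 - (real a * x)^2) ^ b"
    proof -
      have "(real a * x)^2 \<le> 1" using ax x0 by (simp add: power_le_one)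
      then show ?thesis using Bernoulli_inequality[of "- ((real a * x)^2)" b] by simp
    qed
    moreover have "real (max (a * b^2) (b * a^2)) = real b * real a ^ 2"
    proof -
      have "(a*b)*b \<le> (a*b)*a" using False by (intro mult_le_mono2) simp
      hence "a * b^2 \<le> b * a^2" by (simp add: power2_eq_square algebra_simps)
      thus ?thesis by (simp add: max_def)
    qed
    ultimately show ?thesis unfolding eq1 eq2 by (simp add: power_mult_distrib algebra_simps)
  qed
next
  have n0: "real n > 0" using assms by simp
  have h: "27 * (real u * real v ^ 2) \<le> 4 * (real u + real v) ^ 3" for u v :: nat
  proof -
    have "0 \<le> (real v - 2 * real u)^2 * (4 * real v + real u)" by simp
    then show ?thesis by (simp add: algebra_simps power2_eq_square power3_eq_cube)
  qed
  have calculation: "real (max (a * b^2) (b * a^2)) \<le> (4/27) * (real k)^3"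
    using h[of a b] h[of b a] assms(3) by (auto simp: max_def add.commute)
  then show "1 - real (max (a * b^2) (b * a^2)) / (real n)^2
           \<ge> 1 - (4/27) * (real k)^3 / (real n)^2"
  proof -
    have "real (max (a * b^2) (b * a^2)) / (real n)^2 \<le> ((4/27) * (real k)^3) / (real n)^2"
      by (rule divide_right_mono) (use calculation in auto)
    then show ?thesis by simp
  qed
qed

end
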